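(* Let $(X^t)_{t\ge1}$ be real random variables with $X^1>0$ deterministic, and let $a,t_0,C_1,C_2>0$ be constants with $a>1$ and $t_0\ge a$. Suppose that for every $t\ge1$, $$\mathbb E[\exp(X^{t+1})]\le\mathbb E\Big[\exp\Big(\Big(1-\frac{a}{t+t_0}\Big)X^t+\frac{C_1}{t+t_0}+\frac{C_2}{(t+t_0)^2}\Big)\Big].$$ Then for every $t\ge1$, $$\mathbb E[\exp(X^{t+1})]\le\exp\Big(\frac{(t_0+1)^aX^1}{(t+1+t_0)^a}+\frac{C_1}{a}+\frac{3C_2/(a-1)}{t+1+t_0}\Big).$$
   Context: All expectations are assumed to be finite (possibly $+\infty$ on the right-hand side of the hypothesis makes it vacuous). *)

theory Defs
  imports "HOL-Probability.Probability"
begin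

end

theory Submission
  imports Defs
begin

lemma part1:
  fixes a s :: real assumes "a > 1" "s > a"
  shows "(1 - a/s) * (s+1) powr a \<le> s powr a"
proof -
  have s0: "s > 0" using assms by linarith
  have "ln (1 + 1/s) \<le> 1/s" using s0 by (intro ln_add_one_self_le_self) simp
  moreover have "ln (s/(s+1)) = - ln (1 + 1/s)"
  proof -
    have "1 + 1/s = (s+1)/s" using s0 by (simp add: field_simps)
    thus ?thesis using s0 by (simp add: ln_div)
  qed
  ultimately have "ln (s/(s+1)) \<ge> -1/s" by simp
  hence "a * (-1/s) \<le> a * ln (s/(s+1))" using assms by (intro mult_left_mono) auto
  hence "a * ln (s/(s+1)) \<ge> - a/s" by simp
  hence "exp (a * ln (s/(s+1))) \<ge> exp (-a/s)" by simp
  moreover have "exp (-a/s) \<ge> 1 + (-a/s)" by (rule exp_ge_add_one_self)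
  moreover have "(s/(s+1)) powr a = exp (a * ln (s/(s+1)))" using s0
    by (simp add: powr_def mult.commute)
  ultimately have "1 - a/s \<le> (s/(s+1)) powr a" by (metis add_uminus_conv_diff divide_minus_left exp_le_cancel_iff order_trans)
  also have "\<dots> = s powr a / (s+1) powr a" using s0 by (simp add: powr_divide)
  finally have "1 - a/s \<le> s powr a / (s+1) powr a" .
  moreover have "(s+1) powr a > 0" using s0 by simp
  ultimately show ?thesis by (simp add: pos_le_divide_eq)
qed

lemma part3:
  fixes a s C2 :: real assumes "a > 1" "s > a" "C2 > 0"
  shows "(1 - a/s) * (3*C2/(a-1)) / s + C2/s^2 \<le> (3*C2/(a-1)) / (s+1)"
proof -
  define Kc where "Kc = 3*C2/(a-1)"
  have s0: "s > 1" using assms by linarith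
  have Kc: "Kc*(a-1) = 3*C2" using assms unfolding Kc_def by simp
  have K0: "Kc > 0" using assms unfolding Kc_def by simp
  have "C2*(s+1) \<le> Kc * ((a - 1) * s + a)"
  proof -
    have "Kc * ((a - 1) * s + a) = (Kc * (a - 1)) * s + Kc * a" by (simp add: algebra_simps)
    hence "Kc * ((a - 1) * s + a) = 3 * C2 * s + Kc * a" using Kc by simp
    moreover have "Kc*a \<ge> 0" using K0 assms by simp
    moreover have "C2*(s+1) \<le> C2*(3* s)" using s0 assms by (intro mult_left_mono) auto
    ultimately show ?thesis by linarith
  qed
  hence "Kc*(s-a)*(s+1) + C2*(s+1) \<le> Kc* s^2"
    by (simp add: algebra_simps power2_eq_square)
  hence "(Kc*(s-a)*(s+1) + C2*(s+1)) / (s^2*(s+1)) \<le> Kc* s^2 / (s^2*(s+1))"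
    using s0 by (intro divide_right_mono) auto
  moreover have "(Kc*(s-a)*(s+1) + C2*(s+1)) / (s^2*(s+1)) = (1 - a/s) * Kc / s + C2/s^2"
  proof -
    have "Kc*(s-a)*(s+1) + C2*(s+1) = (Kc*(s-a) + C2)*(s+1)" by (simp add: algebra_simps)
    hence "(Kc*(s-a)*(s+1) + C2*(s+1)) / (s^2*(s+1)) = (Kc*(s-a) + C2) / s^2"
      using s0 by simp
    also have "\<dots> = (1 - a/s) * Kc / s + C2/s^2"
      using s0 by (simp add: field_simps power2_eq_square)
    finally show ?thesis .
  qed
  moreover have "Kc* s^2 / (s^2*(s+1)) = Kc/(s+1)"
  proof -
    have "s^2 \<noteq> 0" using s0 by simp
    thus ?thesis by (metis mult.commute nonzero_mult_divide_mult_cancel_left)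
  qed
  ultimately show ?thesis unfolding Kc_def by simp
qed

lemma step_real:
  fixes a s C1 C2 P :: real assumes "a > 1" "s > a" "C1 > 0" "C2 > 0" "P \<ge> 0"
  shows "(1 - a/s) * (P / s powr a + C1/a + (3*C2/(a-1)) / s) + C1/s + C2/s^2
     \<le> P / (s+1) powr a + C1/a + (3*C2/(a-1)) / (s+1)"
proof -
  have s0: "s > 0" using assms by linarith
  have "(1 - a/s) * (s+1) powr a \<le> s powr a" using part1 assms by blast
  hence "(1 - a/s) * (s+1) powr a * P \<le> s powr a * P" using assms by (intro mult_right_mono) auto
  hence 1: "(1 - a/s) * (P / s powr a) \<le> P / (s+1) powr a"
    using s0 by (simp add: field_simps)
  have 2: "(1 - a/s) * (C1/a) + C1/s = C1/a" using assms s0 by (simp add: field_simps)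
  have 3: "(1 - a/s) * ((3*C2/(a-1)) / s) + C2/s^2 \<le> (3*C2/(a-1)) / (s+1)"
    using part3[OF assms(1,2,4)] by simp
  show ?thesis using 1 2 3 by (simp add: distrib_left)
qed

lemma exp_tangent:
  fixes c z :: real assumes "0 \<le> c" "c \<le> 1"
  shows "exp (c*z) \<le> (1 - c) + c * exp z"
proof -
  have "exp ((1 - c) *\<^sub>R 0 + c *\<^sub>R z) \<le> (1 - c) * exp 0 + c * exp z"
    using convex_onD[OF exp_convex, of c 0 z] assms by simp
  thus ?thesis by simp
qed


theorem lemma8:
  fixes M :: "'s measure" and X :: "nat \<Rightarrow> 's \<Rightarrow> real"
    and x1 a t0 C1 C2 :: real
  assumes "prob_space M"
    and meas: "\<And>t. t \<ge> 1 \<Longrightarrow> X t \<in> borel_measurable M"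
    and det: "\<And>\<omega>. \<omega> \<in> space M \<Longrightarrow> X 1 \<omega> = x1"
    and "x1 > 0"
    and "a > 1" and "t0 \<ge> a" and "C1 > 0" and "C2 > 0"
    and rec: "\<And>t::nat. t \<ge> 1 \<Longrightarrow>
      (\<integral>\<^sup>+ \<omega>. ennreal (exp (X (t + 1) \<omega>)) \<partial>M)
        \<le> (\<integral>\<^sup>+ \<omega>. ennreal (exp ((1 - a / (real t + t0)) * X t \<omega>
              + C1 / (real t + t0) + C2 / (real t + t0)^2)) \<partial>M)"
  shows "\<And>t::nat. t \<ge> 1 \<Longrightarrow>
      (\<integral>\<^sup>+ \<omega>. ennreal (exp (X (t + 1) \<omega>)) \<partial>M)
        \<le> ennreal (exp ((t0 + 1) powr a * x1 / (real t + 1 + t0) powr a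
              + C1 / a + (3 * C2 / (a - 1)) / (real t + 1 + t0)))"
proof -
  interpret P: prob_space M by fact
  define B where "B t = (t0 + 1) powr a * x1 / (real t + t0) powr a + C1 / a
      + (3 * C2 / (a - 1)) / (real t + t0)" for t :: nat
  have P0: "(t0 + 1) powr a * x1 \<ge> 0" using assms by simp
  have main: "(\<integral>\<^sup>+ \<omega>. ennreal (exp (X t \<omega>)) \<partial>M) \<le> ennreal (exp (B t))"
    if "t \<ge> 1" for t
    using that
  proof (induction t rule: dec_induct)
    case base
    have "(\<integral>\<^sup>+ \<omega>. ennreal (exp (X 1 \<omega>)) \<partial>M) = (\<integral>\<^sup>+ \<omega>. ennreal (exp x1) \<partial>M)"
      by (rule nn_integral_cong) (use det in auto)
    also have "\<dots> = ennreal (exp x1)" by (simp add: P.emeasure_space_1)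
    also have "\<dots> \<le> ennreal (exp (B 1))"
    proof -
      have q: "(t0 + 1) powr a * x1 / (real 1 + t0) powr a = x1"
      proof -
        have "(t0 + 1) powr a > 0" using assms by simp
        moreover have "real 1 + t0 = t0 + 1" by simp
        ultimately show ?thesis by (simp add: add.commute)
      qed
      have "C1 / a \<ge> 0" "(3 * C2 / (a - 1)) / (real 1 + t0) \<ge> 0" using assms by simp_all
      hence "x1 \<le> B 1" using q unfolding B_def by linarith
      thus ?thesis by (simp add: ennreal_leI)
    qed
    finally show ?case .
  next
    case (step t)
    define s where "s = real t + t0"
    define c where "c = 1 - a / s"
    define d where "d = C1 / s + C2 / s^2"
    have sa: "s > a" using step assms unfolding s_def by simp
    have s0: "s > 0" using sa assms by simp
    have c0: "0 \<le> c" "c \<le> 1" using sa s0 assms unfolding c_def by (auto simp: field_simps)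
    have mX: "X t \<in> borel_measurable M" using meas step by simp
    have "(\<integral>\<^sup>+ \<omega>. ennreal (exp (X (Suc t) \<omega>)) \<partial>M)
        \<le> (\<integral>\<^sup>+ \<omega>. ennreal (exp (c * X t \<omega> + d)) \<partial>M)"
      using rec[OF step(1)] unfolding c_def d_def s_def by (simp add: add.assoc)
    also have "\<dots> \<le> (\<integral>\<^sup>+ \<omega>. ennreal (exp (c * B t + d) * (1 - c))
          + ennreal (exp (c * B t + d) * c * exp (- B t)) * ennreal (exp (X t \<omega>)) \<partial>M)"
    proof (rule nn_integral_mono)
      fix \<omega>
      have "exp (c * (X t \<omega> - B t)) \<le> (1 - c) + c * exp (X t \<omega> - B t)"
        by (rule exp_tangent[OF c0])
      hence "exp (c * B t + d) * exp (c * (X t \<omega> - B t))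
          \<le> exp (c * B t + d) * ((1 - c) + c * exp (X t \<omega> - B t))"
        by (intro mult_left_mono) auto
      moreover have "exp (c * B t + d) * exp (c * (X t \<omega> - B t)) = exp (c * X t \<omega> + d)"
        by (simp only: mult_exp_exp) (simp add: algebra_simps)
      moreover have "exp (c * B t + d) * ((1 - c) + c * exp (X t \<omega> - B t))
          = exp (c * B t + d) * (1 - c) + exp (c * B t + d) * c * exp (- B t) * exp (X t \<omega>)"
      proof -
        have "exp (X t \<omega> - B t) = exp (- B t) * exp (X t \<omega>)" by (simp add: mult_exp_exp)
        thus ?thesis by (simp add: algebra_simps)
      qed
      ultimately have "exp (c * X t \<omega> + d) \<le> exp (c * B t + d) * (1 - c)
           + exp (c * B t + d) * c * exp (- B t) * exp (X t \<omega>)" by simp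
      thus "ennreal (exp (c * X t \<omega> + d)) \<le> ennreal (exp (c * B t + d) * (1 - c))
          + ennreal (exp (c * B t + d) * c * exp (- B t)) * ennreal (exp (X t \<omega>))"
      proof -
        have e1: "exp (c * B t + d) * (1 - c) \<ge> 0" using c0 by simp
        have e2: "exp (c * B t + d) * c * exp (- B t) \<ge> 0" using c0 by simp
        have "ennreal (exp (c * X t \<omega> + d)) \<le> ennreal (exp (c * B t + d) * (1 - c)
           + exp (c * B t + d) * c * exp (- B t) * exp (X t \<omega>))"
          by (rule ennreal_leI) fact
        also have "\<dots> = ennreal (exp (c * B t + d) * (1 - c))
          + ennreal (exp (c * B t + d) * c * exp (- B t) * exp (X t \<omega>))"
          using e1 e2 by (intro ennreal_plus) auto
        also have "ennreal (exp (c * B t + d) * c * exp (- B t) * exp (X t \<omega>))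
           = ennreal (exp (c * B t + d) * c * exp (- B t)) * ennreal (exp (X t \<omega>))"
          using e2 by (intro ennreal_mult) auto
        finally show ?thesis .
      qed
    qed
    also have "\<dots> = ennreal (exp (c * B t + d) * (1 - c))
          + ennreal (exp (c * B t + d) * c * exp (- B t)) * (\<integral>\<^sup>+ \<omega>. ennreal (exp (X t \<omega>)) \<partial>M)"
      using mX by (subst nn_integral_add) (auto simp: nn_integral_cmult P.emeasure_space_1)
    also have "\<dots> \<le> ennreal (exp (c * B t + d) * (1 - c))
          + ennreal (exp (c * B t + d) * c * exp (- B t)) * ennreal (exp (B t))"
      using step(3) by (intro add_left_mono mult_left_mono) auto
    also have "\<dots> = ennreal (exp (c * B t + d))"
    proof -
      have "exp (c * B t + d) * (1 - c) + exp (c * B t + d) * c * exp (- B t) * exp (B t)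
          = exp (c * B t + d)"
      proof -
        have "exp (- B t) * exp (B t) = 1" by (simp add: mult_exp_exp)
        hence "exp (c * B t + d) * c * exp (- B t) * exp (B t) = exp (c * B t + d) * c"
          by (metis mult.assoc mult.right_neutral)
        thus ?thesis by (simp add: algebra_simps)
      qed
      have e1: "exp (c * B t + d) * (1 - c) \<ge> 0" using c0 by simp
      have e2: "exp (c * B t + d) * c * exp (- B t) \<ge> 0" using c0 by simp
      have "ennreal (exp (c * B t + d) * (1 - c))
          + ennreal (exp (c * B t + d) * c * exp (- B t)) * ennreal (exp (B t))
          = ennreal (exp (c * B t + d) * (1 - c) + exp (c * B t + d) * c * exp (- B t) * exp (B t))"
        using e1 e2 by (simp add: ennreal_plus ennreal_mult)
      thus ?thesis using \<open>exp (c * B t + d) * (1 - c) + _ = _\<close> by simp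
    qed
    also have "\<dots> \<le> ennreal (exp (B (Suc t)))"
    proof -
      have "c * B t + d \<le> B (Suc t)"
      proof -
        have b1: "B t = (t0 + 1) powr a * x1 / s powr a + C1 / a + (3 * C2 / (a - 1)) / s"
          unfolding B_def s_def by simp
        have b2: "B (Suc t) = (t0 + 1) powr a * x1 / (s+1) powr a + C1 / a + (3 * C2 / (a - 1)) / (s+1)"
          unfolding B_def s_def by (simp add: add_ac)
        show ?thesis using step_real[OF assms(5) sa assms(7,8) P0]
          unfolding b1 b2 c_def d_def by (simp add: add_ac)
      qed
      thus ?thesis by (simp add: ennreal_leI)
    qed
    finally show ?case .
  qed
  fix t :: nat assume "t \<ge> 1"
  hence "(\<integral>\<^sup>+ \<omega>. ennreal (exp (X (t+1) \<omega>)) \<partial>M) \<le> ennreal (exp (B (t+1)))"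
    using main[of "t+1"] by simp
  moreover have "real (t + 1) + t0 = real t + 1 + t0" by simp
  ultimately show "(\<integral>\<^sup>+ \<omega>. ennreal (exp (X (t + 1) \<omega>)) \<partial>M)
        \<le> ennreal (exp ((t0 + 1) powr a * x1 / (real t + 1 + t0) powr a
              + C1 / a + (3 * C2 / (a - 1)) / (real t + 1 + t0)))"
    unfolding B_def by metis
qed

end
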